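(* Let $1\leq\alpha\leq2$ and let $f(z)=z+\sum_{n=2}^{\infty}a_{n}z^{n}$ be analytic in the open unit disc $\mathbb{U}=\{z\in\mathbb{C}:|z|<1\}$ and satisfy \[ \operatorname{Re}\left\{\frac{zf'(z)}{f(z)}\right\}>\frac{\alpha}{2}-1\qquad (z\in\mathbb{U}). \] Then \[ \left|a_{2}a_{4}-a_{3}^{2}\right|\leq\frac{(2-\frac{\alpha}{2})^{2}}{3}\left[4\left((2-\tfrac{\alpha}{2})^{2}-1\right)+3\right]. \]
   Context: The class of such $f$ is denoted $S_{\alpha}^{\ast}$ in the paper (starlike functions of order $\frac{\alpha}{2}-1$). The quantity $a_2a_4-a_3^2$ is the second Hankel determinant of $f$. *)

theory Defs
  imports "HOL-Analysis.Analysis"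
begin

definition taylor_coeff :: "(complex \<Rightarrow> complex) \<Rightarrow> nat \<Rightarrow> complex" where
  "taylor_coeff f n = (deriv ^^ n) f 0 / of_nat (fact n)"

end

theory Submission
  imports Defs "HOL-Complex_Analysis.Complex_Analysis"
begin

lemma real_key:
  fixes a b c :: real
  assumes a0: "0 \<le> a" and a1: "a < 1" and b0: "0 \<le> b" and b1: "b \<le> 1 - a^2"
    and c0: "0 \<le> c" and c1: "c \<le> (1 - a^2) - b^2 / (1 + a)"
  shows "4*a*c + 2*a^2*b + 3*b^2 + 3*a^4 \<le> 3"
proof -
  define s where "s = 1 - a^2"
  have s0: "s > 0" using a0 a1 unfolding s_def using power_strict_mono[of a 1 2] by simp
  define G0 where "G0 = 3 - (4*a - 4*a^3 + 3*a^4)"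
  have h: "G0 \<ge> 0"
  proof -
    have "G0 = (1 - a) * ((1-a) + (1 - a^2) + 1 + 3*a^3)"
      unfolding G0_def by (simp add: algebra_simps power2_eq_square power3_eq_cube power4_eq_xxxx)
    also have "\<dots> \<ge> 0" using a0 a1 power_mono[of a 1 2] by (intro mult_nonneg_nonneg) (auto intro!: add_nonneg_nonneg mult_nonneg_nonneg)
    finally show ?thesis .
  qed
  define PP where "PP = 3*(1+a) - 4*a* s*(1+a) + 4*a*b^2 - (1+a)*(2*a^2*b+3*b^2+3*a^4)"
  have Pid: "s*PP = (s-b)*((1+a)*G0 + (3-a)*b* s)"
    unfolding PP_def G0_def s_def by (simp add: algebra_simps power2_eq_square power3_eq_cube power4_eq_xxxx)
  have "(s-b)*((1+a)*G0 + (3-a)*b* s) \<ge> 0"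
    using b1 b0 a0 a1 h s0 unfolding s_def[symmetric] by (intro mult_nonneg_nonneg add_nonneg_nonneg) auto
  hence PP0: "PP \<ge> 0" using Pid s0 by (metis zero_le_mult_iff not_less)
  have "4*a*c \<le> 4*a*(s - b^2/(1+a))" using c1 a0 unfolding s_def by (intro mult_left_mono) auto
  also have "4*a*(s - b^2/(1+a)) = (4*a* s*(1+a) - 4*a*b^2)/(1+a)" using a0 by (simp add: field_simps)
  finally have "(1+a)*(4*a*c) \<le> 4*a* s*(1+a) - 4*a*b^2" using a0 by (simp add: field_simps)
  hence "(1+a)*(4*a*c + 2*a^2*b + 3*b^2 + 3*a^4) \<le> (1+a)*3"
    using PP0 unfolding PP_def by (simp add: algebra_simps)
  moreover have "(0::real) < 1 + a" using a0 by simp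
  ultimately show ?thesis using mult_le_cancel_left_pos by blast
qed

lemma cnorm_sq: "(complex_of_real (norm z))^2 = z * cnj z"
  using complex_norm_square[of z] by simp

lemma fps_mult_nth_2: "fps_nth (f * g) 2 = fps_nth f 0 * fps_nth g 2 + fps_nth f 1 * fps_nth g 1 + fps_nth f 2 * fps_nth g 0"
  by (simp add: fps_mult_nth eval_nat_numeral)

lemma fps_mult_nth_3: "fps_nth (f * g) 3 = fps_nth f 0 * fps_nth g 3 + fps_nth f 1 * fps_nth g 2 + fps_nth f 2 * fps_nth g 1 + fps_nth f 3 * fps_nth g 0"
  by (simp add: fps_mult_nth eval_nat_numeral)

lemma hfe: "g holomorphic_on ball 0 1 \<Longrightarrow> g has_fps_expansion fps_expansion g 0"
  by (rule has_fps_expansion_fps_expansion) auto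

lemma fps_eq_ball:
  fixes f g :: "complex \<Rightarrow> complex"
  assumes "f has_fps_expansion F" "g has_fps_expansion G" "\<And>z. z \<in> ball 0 1 \<Longrightarrow> f z = g z"
  shows "F = G"
proof -
  have "eventually (\<lambda>z. z \<in> ball (0::complex) 1) (nhds 0)"
    by (intro eventually_nhds_in_open) auto
  hence "eventually (\<lambda>z. f z = g z) (nhds 0)"
    by eventually_elim (simp add: assms(3))
  hence "g has_fps_expansion F" using assms(1) has_fps_expansion_cong by blast
  thus ?thesis using assms(2) fps_expansion_unique_complex by blast
qed

lemma fps_expansion_nth0: "fps_nth (fps_expansion g 0) 0 = g 0"
  by (simp add: fps_expansion_def)

lemma strict_bound:
  assumes hol: "g holomorphic_on ball 0 1" and le: "\<And>z. z \<in> ball 0 1 \<Longrightarrow> norm (g z) \<le> 1"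
    and g0: "norm (g 0) < 1" and z: "z \<in> ball 0 1"
  shows "norm (g z) < 1"
proof (rule ccontr)
  assume "\<not> norm (g z) < 1"
  hence eq: "norm (g z) = 1" using le z by force
  have "g constant_on ball 0 1"
    by (rule maximum_modulus_principle[OF hol, where U = "ball 0 1" and \<xi> = z]) (use le eq z in auto)
  then obtain c where "\<And>x. x \<in> ball 0 1 \<Longrightarrow> g x = c" unfolding constant_on_def by blast
  hence "g 0 = g z" using z by auto
  thus False using eq g0 by simp
qed

lemma const_case:
  assumes hol: "g holomorphic_on ball 0 1" and le: "\<And>z. z \<in> ball 0 1 \<Longrightarrow> norm (g z) \<le> 1"
    and g0: "norm (g 0) = 1"
  shows "fps_expansion g 0 = fps_const (g 0)"
proof -
  have "g constant_on ball 0 1"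
    by (rule maximum_modulus_principle[OF hol, where U = "ball 0 1" and \<xi> = 0]) (use le g0 in auto)
  then obtain c where c: "\<And>x. x \<in> ball 0 1 \<Longrightarrow> g x = c" unfolding constant_on_def by blast
  hence "\<And>x. x \<in> ball 0 1 \<Longrightarrow> g x = g 0" by auto
  thus ?thesis by (intro fps_eq_ball[OF hfe[OF hol] has_fps_expansion_const])
qed

lemma moebius_ineq:
  fixes a x :: complex
  assumes "norm a < 1" "norm x < 1"
  shows "norm (x - a) < norm (1 - cnj a * x)"
proof -
  have id: "(norm (1 - cnj a * x))^2 - (norm (x - a))^2 = (1 - (norm a)^2) * (1 - (norm x)^2)"
  proof -
    have "complex_of_real ((norm (1 - cnj a * x))^2 - (norm (x - a))^2) =
          (1 - cnj a * x) * cnj (1 - cnj a * x) - (x - a) * cnj (x - a)"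
      by (simp add: cnorm_sq)
    also have "\<dots> = (1 - a * cnj a) * (1 - x * cnj x)" by (simp add: algebra_simps)
    also have "\<dots> = complex_of_real ((1 - (norm a)^2) * (1 - (norm x)^2))"
      by (simp add: cnorm_sq)
    finally show ?thesis using of_real_eq_iff by blast
  qed
  have "(norm a)^2 < 1" "(norm x)^2 < 1" using assms by (simp_all add: power_less_one_iff abs_less_iff)
  hence "(1 - (norm a)^2) * (1 - (norm x)^2) > 0" by simp
  hence "(norm (x - a))^2 < (norm (1 - cnj a * x))^2" using id by linarith
  thus ?thesis by (simp add: power2_less_imp_less)
qed

lemma schur_step:
  assumes hol: "g holomorphic_on ball 0 1" and le: "\<And>z. z \<in> ball 0 1 \<Longrightarrow> norm (g z) \<le> 1"
    and g0: "norm (g 0) < 1"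
  obtains h where "h holomorphic_on ball 0 1" "\<And>z. z \<in> ball 0 1 \<Longrightarrow> norm (h z) \<le> 1"
    "\<And>z. z \<in> ball 0 1 \<Longrightarrow> g z - g 0 = z * (1 - cnj (g 0) * g z) * h z"
proof -
  define a where "a = g 0"
  have lt: "\<And>z. z \<in> ball 0 1 \<Longrightarrow> norm (g z) < 1" using strict_bound[OF hol le g0] by blast
  have den: "1 - cnj a * g z \<noteq> 0" if "z \<in> ball 0 1" for z
  proof
    assume "1 - cnj a * g z = 0"
    hence "cnj a * g z = 1" by simp
    hence "norm (cnj a) * norm (g z) = 1" by (metis norm_mult norm_one)
    moreover have "norm (cnj a) * norm (g z) \<le> norm (cnj a)"
      using lt[OF that] by (intro mult_left_le) auto
    ultimately show False using g0 unfolding a_def by simp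
  qed
  define \<phi> where "\<phi> z = (g z - a) / (1 - cnj a * g z)" for z
  have hol\<phi>: "\<phi> holomorphic_on ball 0 1"
    unfolding \<phi>_def using den by (intro holomorphic_intros hol) auto
  have \<phi>0: "\<phi> 0 = 0" unfolding \<phi>_def a_def by simp
  have \<phi>lt: "norm (\<phi> z) < 1" if "norm z < 1" for z
  proof -
    have z: "z \<in> ball 0 1" using that by simp
    have "norm (g z - a) < norm (1 - cnj a * g z)"
      using moebius_ineq[OF _ lt[OF z]] g0 unfolding a_def by blast
    thus ?thesis unfolding \<phi>_def using den[OF z] by (simp add: norm_divide divide_less_eq)
  qed
  obtain h where holh: "h holomorphic_on ball 0 1" and \<phi>h: "\<And>z. norm z < 1 \<Longrightarrow> \<phi> z = z * h z"
     and dh: "deriv \<phi> 0 = h 0"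
    by (rule Schwarz3[OF hol\<phi> \<phi>0]) blast
  have hle: "norm (h z) \<le> 1" if "z \<in> ball 0 1" for z
  proof (cases "z = 0")
    case True
    thus ?thesis using Schwarz_Lemma(2)[OF hol\<phi> \<phi>0 \<phi>lt, of 0] dh by simp
  next
    case False
    have "norm (\<phi> z) \<le> norm z" using Schwarz_Lemma(1)[OF hol\<phi> \<phi>0 \<phi>lt] that by simp
    hence "norm z * norm (h z) \<le> norm z * 1" using \<phi>h[of z] that by (simp add: norm_mult)
    thus ?thesis using False by (simp add: mult_le_cancel_left_pos)
  qed
  show ?thesis
  proof (rule that[OF holh hle])
    fix z :: complex assume z: "z \<in> ball 0 1"
    have "g z - a = \<phi> z * (1 - cnj a * g z)" unfolding \<phi>_def using den[OF z] by simp
    also have "\<dots> = z * (1 - cnj a * g z) * h z" using \<phi>h[of z] z by simp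
    finally show "g z - g 0 = z * (1 - cnj (g 0) * g z) * h z" unfolding a_def .
  qed
qed

lemma schur_fps:
  assumes hol: "g holomorphic_on ball 0 1" and le: "\<And>z. z \<in> ball 0 1 \<Longrightarrow> norm (g z) \<le> 1"
    and g0: "norm (g 0) < 1"
  obtains h where "h holomorphic_on ball 0 1" "\<And>z. z \<in> ball 0 1 \<Longrightarrow> norm (h z) \<le> 1"
    "fps_nth (fps_expansion g 0) 1 = (1 - (norm (g 0))^2) * fps_nth (fps_expansion h 0) 0"
    "fps_nth (fps_expansion g 0) 2 = (1 - (norm (g 0))^2) * fps_nth (fps_expansion h 0) 1
        - cnj (g 0) * fps_nth (fps_expansion g 0) 1 * fps_nth (fps_expansion h 0) 0"
proof -
  obtain h where holh: "h holomorphic_on ball 0 1" and hle: "\<And>z. z \<in> ball 0 1 \<Longrightarrow> norm (h z) \<le> 1"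
    and eq: "\<And>z. z \<in> ball 0 1 \<Longrightarrow> g z - g 0 = z * (1 - cnj (g 0) * g z) * h z"
    using schur_step[OF hol le g0] by blast
  define G where "G = fps_expansion g 0"
  define H where "H = fps_expansion h 0"
  have G0: "fps_nth G 0 = g 0" unfolding G_def by (simp add: fps_expansion_nth0)
  have e1: "(\<lambda>z. g z - g 0) has_fps_expansion G - fps_const (g 0)"
    unfolding G_def by (intro has_fps_expansion_diff hfe hol has_fps_expansion_const)
  have e2: "(\<lambda>z. z * (1 - cnj (g 0) * g z) * h z) has_fps_expansion
              fps_X * (1 - fps_const (cnj (g 0)) * G) * H"
    unfolding G_def H_def
    by (intro has_fps_expansion_mult has_fps_expansion_fps_X has_fps_expansion_diff
          has_fps_expansion_1 has_fps_expansion_cmult_left hfe hol holh)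
  have F: "G - fps_const (g 0) = fps_X * (1 - fps_const (cnj (g 0)) * G) * H"
    by (rule fps_eq_ball[OF e1 e2 eq])
  have c1: "fps_nth G 1 = (1 - cnj (g 0) * g 0) * fps_nth H 0"
    using arg_cong[OF F, of "\<lambda>F. fps_nth F 1"] G0 by (simp add: mult.assoc)
  have c2: "fps_nth G 2 = (1 - cnj (g 0) * g 0) * fps_nth H 1 - cnj (g 0) * fps_nth G 1 * fps_nth H 0"
    using arg_cong[OF F, of "\<lambda>F. fps_nth F 2"] G0 by (simp add: mult.assoc fps_mult_nth_1 algebra_simps)
  have nn: "cnj (g 0) * g 0 = complex_of_real ((norm (g 0))^2)"
    by (simp add: cnorm_sq mult.commute)
  show ?thesis
    using that[OF holh hle] c1 c2 unfolding G_def[symmetric] H_def[symmetric] nn by simp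
qed

lemma cb1:
  assumes hol: "g holomorphic_on ball 0 1" and le: "\<And>z. z \<in> ball 0 1 \<Longrightarrow> norm (g z) \<le> 1"
  shows "norm (fps_nth (fps_expansion g 0) 0) \<le> 1"
    and "norm (fps_nth (fps_expansion g 0) 1) \<le> 1 - (norm (fps_nth (fps_expansion g 0) 0))^2"
    and "norm (fps_nth (fps_expansion g 0) 0) = 1 \<Longrightarrow> fps_nth (fps_expansion g 0) 1 = 0 \<and> fps_nth (fps_expansion g 0) 2 = 0"
proof -
  have G0: "fps_nth (fps_expansion g 0) 0 = g 0" by (simp add: fps_expansion_nth0)
  show b0: "norm (fps_nth (fps_expansion g 0) 0) \<le> 1" using le[of 0] G0 by simp
  show "norm (fps_nth (fps_expansion g 0) 0) = 1 \<Longrightarrow> fps_nth (fps_expansion g 0) 1 = 0 \<and> fps_nth (fps_expansion g 0) 2 = 0"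
    using const_case[OF hol le] G0 by simp
  show "norm (fps_nth (fps_expansion g 0) 1) \<le> 1 - (norm (fps_nth (fps_expansion g 0) 0))^2"
  proof (cases "norm (g 0) = 1")
    case True
    thus ?thesis using const_case[OF hol le] G0 by simp
  next
    case False
    hence lt: "norm (g 0) < 1" using b0 G0 by simp
    obtain h where holh: "h holomorphic_on ball 0 1" and hle: "\<And>z. z \<in> ball 0 1 \<Longrightarrow> norm (h z) \<le> 1"
      and c1: "fps_nth (fps_expansion g 0) 1 = (1 - (norm (g 0))^2) * fps_nth (fps_expansion h 0) 0"
      using schur_fps[OF hol le lt] by blast
    have "norm (fps_nth (fps_expansion h 0) 0) \<le> 1" using hle[of 0] by (simp add: fps_expansion_nth0)
    moreover have "(norm (g 0))^2 \<le> 1" using lt by (simp add: power_le_one)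
    ultimately have "norm (fps_nth (fps_expansion g 0) 1) \<le> (1 - (norm (g 0))^2) * 1"
      unfolding c1 by (simp add: norm_mult abs_of_nonneg mult_left_mono del: of_real_diff)
        (metis mult_left_mono mult.right_neutral diff_ge_0_iff_ge)
    thus ?thesis using G0 by simp
  qed
qed

lemma cb2:
  assumes hol: "g holomorphic_on ball 0 1" and le: "\<And>z. z \<in> ball 0 1 \<Longrightarrow> norm (g z) \<le> 1"
    and lt: "norm (fps_nth (fps_expansion g 0) 0) < 1"
  shows "norm (fps_nth (fps_expansion g 0) 2 + cnj (fps_nth (fps_expansion g 0) 0) * (fps_nth (fps_expansion g 0) 1)^2
            / (1 - (norm (fps_nth (fps_expansion g 0) 0))^2))
         \<le> (1 - (norm (fps_nth (fps_expansion g 0) 0))^2) - (norm (fps_nth (fps_expansion g 0) 1))^2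
            / (1 - (norm (fps_nth (fps_expansion g 0) 0))^2)"
proof -
  define G where "G = fps_expansion g 0"
  have G0: "fps_nth G 0 = g 0" unfolding G_def by (simp add: fps_expansion_nth0)
  have lt': "norm (g 0) < 1" using lt G0 unfolding G_def by simp
  obtain h where holh: "h holomorphic_on ball 0 1" and hle: "\<And>z. z \<in> ball 0 1 \<Longrightarrow> norm (h z) \<le> 1"
      and c1: "fps_nth G 1 = (1 - (norm (g 0))^2) * fps_nth (fps_expansion h 0) 0"
      and c2: "fps_nth G 2 = (1 - (norm (g 0))^2) * fps_nth (fps_expansion h 0) 1
        - cnj (g 0) * fps_nth G 1 * fps_nth (fps_expansion h 0) 0"
    using schur_fps[OF hol le lt'] unfolding G_def by blast
  define s where "s = 1 - (norm (g 0))^2"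
  have s0: "s > 0" unfolding s_def using lt' by (simp add: power_less_one_iff)
  define H where "H = fps_expansion h 0"
  have hb: "norm (fps_nth H 1) \<le> 1 - (norm (fps_nth H 0))^2" unfolding H_def by (rule cb1(2)[OF holh hle])
  have c1': "fps_nth G 1 = complex_of_real s * fps_nth H 0" using c1 unfolding s_def H_def by simp
  have c2': "fps_nth G 2 = complex_of_real s * fps_nth H 1 - cnj (g 0) * fps_nth G 1 * fps_nth H 0"
    using c2 unfolding s_def H_def by simp
  have H0: "fps_nth H 0 = fps_nth G 1 / s" using c1' s0 by (simp add: field_simps)
  have "fps_nth G 2 + cnj (g 0) * (fps_nth G 1)^2 / s = s * fps_nth H 1"
    using c2' s0 unfolding H0 by (simp add: field_simps power2_eq_square)
  hence "norm (fps_nth G 2 + cnj (g 0) * (fps_nth G 1)^2 / s) = s * norm (fps_nth H 1)"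
    using s0 by (simp add: norm_mult)
  also have "\<dots> \<le> s * (1 - (norm (fps_nth G 1 / s))^2)" using hb s0 unfolding H0 by simp
  also have "\<dots> = s - (norm (fps_nth G 1))^2 / s" using s0
    by (simp add: norm_divide field_simps power2_eq_square)
  finally show ?thesis unfolding G_def[symmetric] G0 s_def by simp
qed

lemma A_bound:
  fixes k0 k1 k2 :: complex
  assumes n0: "norm k0 \<le> 1" and n1: "norm k1 \<le> 1 - (norm k0)^2"
    and e1: "norm k0 = 1 \<Longrightarrow> k1 = 0 \<and> k2 = 0"
    and e2: "norm k0 < 1 \<Longrightarrow> norm (k2 + cnj k0 * k1^2 / (1 - (norm k0)^2)) \<le> (1 - (norm k0)^2) - (norm k1)^2 / (1 - (norm k0)^2)"
  shows "norm (4*k0*k2 + 2*k0^2*k1 - 3*k1^2 - 3*k0^4) \<le> 3"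
proof (cases "norm k0 = 1")
  case True
  thus ?thesis using e1 by (simp add: norm_mult norm_power)
next
  case False
  hence lt: "norm k0 < 1" using n0 by simp
  define a where "a = norm k0"
  define b where "b = norm k1"
  define s where "s = 1 - a^2"
  have a0: "0 \<le> a" unfolding a_def by simp
  have s0: "s > 0" unfolding s_def a_def using lt by (simp add: power_less_one_iff)
  have d: "norm (k2 + cnj k0 * k1^2 / s) \<le> s - b^2 / s" using e2[OF lt] unfolding s_def a_def b_def by simp
  have "k2 = (k2 + cnj k0 * k1^2 / s) - cnj k0 * k1^2 / s" by simp
  hence "norm k2 \<le> norm (k2 + cnj k0 * k1^2 / s) + norm (cnj k0 * k1^2 / s)"
    by (metis norm_triangle_ineq4)
  also have "norm (cnj k0 * k1^2 / s) = a * b^2 / s" using s0 unfolding a_def b_def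
    by (simp add: norm_mult norm_divide norm_power)
  finally have "norm k2 \<le> s - b^2 / s + a * b^2 / s" using d by simp
  also have "s - b^2 / s + a * b^2 / s = (1 - a^2) - b^2 / (1 + a)"
  proof -
    have "s = (1 - a) * (1 + a)" unfolding s_def by (simp add: algebra_simps power2_eq_square)
    moreover have "1 + a > 0" using a0 by simp
    moreover have "1 - a > 0" using lt unfolding a_def by simp
    ultimately have e: "b^2*(1-a)/s = b^2/(1+a)" by simp
    have "b^2 / s - a * b^2 / s = b^2*(1-a)/s" by (simp add: diff_divide_distrib[symmetric] algebra_simps)
    thus ?thesis using e unfolding s_def by linarith
  qed
  finally have c1: "norm k2 \<le> (1 - a^2) - b^2 / (1 + a)" .
  have t1: "norm (4*k0*k2 + 2*k0^2*k1 - 3*k1^2 - 3*k0^4) \<le> norm (4*k0*k2 + 2*k0^2*k1 - 3*k1^2) + norm (3*k0^4)"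
    by (rule norm_triangle_ineq4)
  have t2: "norm (4*k0*k2 + 2*k0^2*k1 - 3*k1^2) \<le> norm (4*k0*k2 + 2*k0^2*k1) + norm (3*k1^2)"
    by (rule norm_triangle_ineq4)
  have t3: "norm (4*k0*k2 + 2*k0^2*k1) \<le> norm (4*k0*k2) + norm (2*k0^2*k1)"
    by (rule norm_triangle_ineq)
  have "norm (4*k0*k2 + 2*k0^2*k1 - 3*k1^2 - 3*k0^4) \<le>
        norm (4*k0*k2) + norm (2*k0^2*k1) + norm (3*k1^2) + norm (3*k0^4)"
    using t1 t2 t3 by linarith
  also have "\<dots> = 4*a*norm k2 + 2*a^2*b + 3*b^2 + 3*a^4"
    unfolding a_def b_def by (simp add: norm_mult norm_power)
  also have "\<dots> \<le> 3"
    by (rule real_key[OF a0 _ _ _ _ c1]) (use lt n1 in \<open>auto simp: a_def b_def\<close>)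
  finally show ?thesis .
qed

lemma schwarz_div:
  assumes hol\<phi>: "\<phi> holomorphic_on ball 0 1" and \<phi>0: "\<phi> 0 = 0"
    and \<phi>lt: "\<And>z. norm z < 1 \<Longrightarrow> norm (\<phi> z) < 1"
  obtains h where "h holomorphic_on ball 0 1" "\<And>z. z \<in> ball 0 1 \<Longrightarrow> norm (h z) \<le> 1"
    "\<And>z. z \<in> ball 0 1 \<Longrightarrow> \<phi> z = z * h z"
proof -
  obtain h where holh: "h holomorphic_on ball 0 1" and \<phi>h: "\<And>z. norm z < 1 \<Longrightarrow> \<phi> z = z * h z"
     and dh: "deriv \<phi> 0 = h 0"
    by (rule Schwarz3[OF hol\<phi> \<phi>0]) blast
  have hle: "norm (h z) \<le> 1" if "z \<in> ball 0 1" for z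
  proof (cases "z = 0")
    case True
    thus ?thesis using Schwarz_Lemma(2)[OF hol\<phi> \<phi>0 \<phi>lt, of 0] dh by simp
  next
    case False
    have "norm (\<phi> z) \<le> norm z" using Schwarz_Lemma(1)[OF hol\<phi> \<phi>0 \<phi>lt] that by simp
    hence "norm z * norm (h z) \<le> norm z * 1" using \<phi>h[of z] that by (simp add: norm_mult)
    thus ?thesis using False by (simp add: mult_le_cancel_left_pos)
  qed
  show ?thesis using that[OF holh hle] \<phi>h by simp
qed

lemma cayley_ineq:
  fixes w :: complex and t :: real
  assumes "t > 0" "Re w > 1 - t"
  shows "norm (w - 1) < norm (w + complex_of_real (2*t - 1))"
proof -
  have "(norm (w - 1))^2 = (Re w - 1)^2 + (Im w)^2" by (simp add: cmod_power2)
  moreover have "(norm (w + complex_of_real (2*t - 1)))^2 = (Re w + 2*t - 1)^2 + (Im w)^2"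
    by (simp add: cmod_power2 add_diff_eq)
  moreover have "(Re w + 2*t - 1)^2 - (Re w - 1)^2 = 4*t*(Re w - (1 - t))"
    by (simp add: algebra_simps power2_eq_square)
  moreover have "4*t*(Re w - (1 - t)) > 0" using assms by simp
  ultimately have "(norm (w - 1))^2 < (norm (w + complex_of_real (2*t - 1)))^2" by linarith
  thus ?thesis by (simp add: power2_less_imp_less)
qed

lemma alg:
  fixes G1 G2 G3 Q1 Q2 Q3 K0 K1 K2 T :: complex
  assumes "2*G1 = Q1 + G1" "3*G2 = Q2 + G1*Q1 + G2" "4*G3 = Q3 + G1*Q2 + G2*Q1 + G3"
    "Q1 - K0 = (2*T-1)*K0" "Q2 - (K1 + Q1*K0) = (2*T-1)*K1" "Q3 - (K2 + Q1*K1 + Q2*K0) = (2*T-1)*K2"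
  shows "G1*G3 - G2^2 = T^2/3 * ((4*K0*K2 + 2*K0^2*K1 - 3*K1^2 - 3*K0^4) - 4*(T^2-1)*K0^4)"
proof -
  have q1: "Q1 = 2*T*K0" using assms(4) by (simp add: algebra_simps)
  have g1: "G1 = 2*T*K0" using assms(1) q1 by simp
  have q2: "Q2 = 2*T*K1 + 2*T*K0^2" using assms(5) q1 by (simp add: algebra_simps power2_eq_square)
  have q3: "Q3 = 2*T*K2 + 2*T*K0*K1 + (2*T*K1 + 2*T*K0^2)*K0" using assms(6) q1 q2 by (simp add: algebra_simps)
  have g2: "2*G2 = Q2 + G1*Q1" using assms(2) by (simp add: algebra_simps)
  have g3: "3*G3 = Q3 + G1*Q2 + G2*Q1" using assms(3) by (simp add: algebra_simps)
  have "12*(G1*G3 - G2^2) = 4*G1*(3*G3) - 3*(2*G2)^2" by (simp add: algebra_simps power2_eq_square)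
  also have "\<dots> = 4*G1*(Q3 + G1*Q2 + G2*Q1) - 3*(Q2 + G1*Q1)^2" unfolding g3 g2 ..
  also have "\<dots> = 2*G1*(2*Q3 + 2*G1*Q2 + Q1*(2*G2)) - 3*(Q2 + G1*Q1)^2" by (simp add: algebra_simps)
  also have "\<dots> = 2*G1*(2*Q3 + 2*G1*Q2 + Q1*(Q2 + G1*Q1)) - 3*(Q2 + G1*Q1)^2" unfolding g2 ..
  also have "\<dots> = 12 * (T^2/3 * ((4*K0*K2 + 2*K0^2*K1 - 3*K1^2 - 3*K0^4) - 4*(T^2-1)*K0^4))"
    unfolding q3 g1 q2 q1 by algebra
  finally have "12 * (G1*G3 - G2^2) = 12 * (T^2/3 * ((4*K0*K2 + 2*K0^2*K1 - 3*K1^2 - 3*K0^4) - 4*(T^2-1)*K0^4))" .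
  thus ?thesis by (simp only: mult_cancel_left) simp
qed

lemma final_bound:
  fixes A k0 :: complex and t :: real
  assumes Ab: "norm A \<le> 3" and k0b: "norm k0 \<le> 1" and t1: "1 \<le> t"
  shows "norm (complex_of_real t^2/3 * (A - 4*(complex_of_real t^2-1)*k0^4)) \<le> t^2/3 * (4*(t^2-1)+3)"
proof -
  have k04: "norm k0 ^ 4 \<le> 1" using k0b by (simp add: power_le_one)
  have tt: "t^2 - 1 \<ge> 0" using t1 by (simp add: one_le_power)
  have e1: "complex_of_real t^2/3 = complex_of_real (t^2/3)" by simp
  have e2: "4*(complex_of_real t^2-1)*k0^4 = complex_of_real (4*(t^2-1)) * k0^4" by simp
  have "norm (4*(complex_of_real t^2-1)*k0^4) = 4*(t^2-1) * norm k0 ^ 4"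
    unfolding e2 norm_mult norm_of_real norm_power using tt by simp
  hence n2: "norm (A - 4*(complex_of_real t^2-1)*k0^4) \<le> norm A + 4*(t^2-1) * norm k0 ^ 4"
    using norm_triangle_ineq4[of A "4*(complex_of_real t^2-1)*k0^4"] by simp
  have "4*(t^2-1) * norm k0 ^ 4 \<le> 4*(t^2-1) * 1" using k04 tt by (intro mult_left_mono) auto
  hence n3: "norm (A - 4*(complex_of_real t^2-1)*k0^4) \<le> 4*(t^2-1)+3" using n2 Ab by linarith
  have "norm (complex_of_real t^2/3 * (A - 4*(complex_of_real t^2-1)*k0^4))
        = t^2/3 * norm (A - 4*(complex_of_real t^2-1)*k0^4)"
    unfolding e1 norm_mult norm_of_real by simp
  also have "\<dots> \<le> t^2/3 * (4*(t^2-1)+3)" using n3 by (intro mult_left_mono) auto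
  finally show ?thesis .
qed

theorem theorem2p1:
  fixes f :: "complex \<Rightarrow> complex" and \<alpha> :: real
  assumes "1 \<le> \<alpha>" and "\<alpha> \<le> 2"
    and "f holomorphic_on ball 0 1"
    and "f 0 = 0" and "deriv f 0 = 1"
    and "\<And>z. z \<in> ball 0 1 \<Longrightarrow> z \<noteq> 0 \<Longrightarrow> f z \<noteq> 0"
    and "\<And>z. z \<in> ball 0 1 \<Longrightarrow> z \<noteq> 0 \<Longrightarrow> Re (z * deriv f z / f z) > \<alpha> / 2 - 1"
  shows "cmod (taylor_coeff f 2 * taylor_coeff f 4 - (taylor_coeff f 3)\<^sup>2)
           \<le> (2 - \<alpha>/2)\<^sup>2 / 3 * (4 * ((2 - \<alpha>/2)\<^sup>2 - 1) + 3)"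
proof -
  define t :: real where "t = 2 - \<alpha>/2"
  have t1: "1 \<le> t" and t2: "t \<le> 3/2" using assms(1,2) unfolding t_def by auto
  have holf: "f holomorphic_on ball 0 1" by (rule assms(3))
  obtain g where holg: "g holomorphic_on ball 0 1" and fg: "\<And>z. norm z < 1 \<Longrightarrow> f z = z * g z"
      and dg: "deriv f 0 = g 0"
    by (rule Schwarz3[OF holf assms(4)]) blast
  have g0: "g 0 = 1" using dg assms(5) by simp
  have gnz: "g z \<noteq> 0" if "z \<in> ball 0 1" for z
  proof (cases "z = 0")
    case True thus ?thesis using g0 by simp
  next
    case False thus ?thesis using assms(6)[OF that False] fg[of z] that by auto
  qed
  define q where "q z = deriv f z / g z" for z
  have holdf: "deriv f holomorphic_on ball 0 1" by (rule holomorphic_deriv[OF holf]) auto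
  have holq: "q holomorphic_on ball 0 1" unfolding q_def using gnz by (intro holomorphic_intros holdf holg) auto
  have Req: "Re (q z) > 1 - t" if z: "z \<in> ball 0 1" for z
  proof (cases "z = 0")
    case True thus ?thesis using g0 assms(5) t1 unfolding q_def by simp
  next
    case False
    have "z * deriv f z / f z = q z" unfolding q_def using fg[of z] z False gnz[OF z] by simp
    thus ?thesis using assms(7)[OF z False] unfolding t_def by simp
  qed
  define c where "c = complex_of_real (2*t - 1)"
  have den: "q z + c \<noteq> 0" if z: "z \<in> ball 0 1" for z
  proof
    assume "q z + c = 0"
    hence "Re (q z) + (2*t - 1) = 0" unfolding c_def by (metis Re_complex_of_real plus_complex.sel(1) zero_complex.sel(1))
    thus False using Req[OF z] t1 by simp
  qed
  define \<omega> where "\<omega> z = (q z - 1) / (q z + c)" for z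
  have hol\<omega>: "\<omega> holomorphic_on ball 0 1" unfolding \<omega>_def using den by (intro holomorphic_intros holq) auto
  have q0: "q 0 = 1" unfolding q_def using g0 assms(5) by simp
  have \<omega>0: "\<omega> 0 = 0" unfolding \<omega>_def q0 by simp
  have \<omega>lt: "norm (\<omega> z) < 1" if "norm z < 1" for z
  proof -
    have z: "z \<in> ball 0 1" using that by simp
    have "norm (q z - 1) < norm (q z + c)" unfolding c_def using cayley_ineq[OF _ Req[OF z]] t1 by simp
    thus ?thesis unfolding \<omega>_def using den[OF z] by (simp add: norm_divide divide_less_eq)
  qed
  obtain k where holk: "k holomorphic_on ball 0 1" and kle: "\<And>z. z \<in> ball 0 1 \<Longrightarrow> norm (k z) \<le> 1"
      and \<omega>k: "\<And>z. z \<in> ball 0 1 \<Longrightarrow> \<omega> z = z * k z"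
    using schwarz_div[OF hol\<omega> \<omega>0 \<omega>lt] by blast
  define F where "F = fps_expansion f 0"
  define G where "G = fps_expansion g 0"
  define Q where "Q = fps_expansion q 0"
  define W where "W = fps_expansion \<omega> 0"
  define K where "K = fps_expansion k 0"
  have eF: "f has_fps_expansion F" unfolding F_def by (rule hfe[OF holf])
  have eG: "g has_fps_expansion G" unfolding G_def by (rule hfe[OF holg])
  have eQ: "q has_fps_expansion Q" unfolding Q_def by (rule hfe[OF holq])
  have eW: "\<omega> has_fps_expansion W" unfolding W_def by (rule hfe[OF hol\<omega>])
  have eK: "k has_fps_expansion K" unfolding K_def by (rule hfe[OF holk])
  have R1: "F = fps_X * G"
    by (rule fps_eq_ball[OF eF has_fps_expansion_mult[OF has_fps_expansion_fps_X eG]]) (use fg in simp)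
  have R2: "fps_deriv F = G * Q"
    by (rule fps_eq_ball[OF has_fps_expansion_deriv[OF eF] has_fps_expansion_mult[OF eG eQ]])
       (use gnz in \<open>simp add: q_def\<close>)
  have R3: "Q - Q * W = 1 + fps_const c * W"
  proof (rule fps_eq_ball)
    show "(\<lambda>z. q z - q z * \<omega> z) has_fps_expansion Q - Q * W"
      by (intro has_fps_expansion_diff has_fps_expansion_mult eQ eW)
    show "(\<lambda>z. 1 + c * \<omega> z) has_fps_expansion 1 + fps_const c * W"
      by (intro has_fps_expansion_add has_fps_expansion_1 has_fps_expansion_cmult_left eW)
    fix z :: complex assume z: "z \<in> ball 0 1"
    show "q z - q z * \<omega> z = 1 + c * \<omega> z"
      unfolding \<omega>_def using den[OF z] by (simp add: field_simps)
  qed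
  have R4: "W = fps_X * K"
    by (rule fps_eq_ball[OF eW has_fps_expansion_mult[OF has_fps_expansion_fps_X eK]]) (use \<omega>k in simp)
  have tc: "taylor_coeff f n = fps_nth F n" for n
    unfolding taylor_coeff_def F_def by (simp add: fps_expansion_def)
  have G0: "fps_nth G 0 = 1" unfolding G_def by (simp add: fps_expansion_nth0 g0)
  have Q0: "fps_nth Q 0 = 1" unfolding Q_def by (simp add: fps_expansion_nth0 q0)
  have a2: "taylor_coeff f 2 = fps_nth G 1" unfolding tc R1 by (simp add: numeral_eq_Suc)
  have a3: "taylor_coeff f 3 = fps_nth G 2" unfolding tc R1 by (simp add: numeral_eq_Suc)
  have a4: "taylor_coeff f 4 = fps_nth G 3" unfolding tc R1 by (simp add: numeral_eq_Suc)
  have d1: "fps_nth (fps_deriv F) 1 = 2 * fps_nth G 1" unfolding R1 by (simp add: fps_deriv_nth numeral_eq_Suc)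
  have d2: "fps_nth (fps_deriv F) 2 = 3 * fps_nth G 2" unfolding R1 by (simp add: fps_deriv_nth numeral_eq_Suc)
  have d3: "fps_nth (fps_deriv F) 3 = 4 * fps_nth G 3" unfolding R1 by (simp add: fps_deriv_nth numeral_eq_Suc)
  have E1: "2 * fps_nth G 1 = fps_nth Q 1 + fps_nth G 1"
    using arg_cong[OF R2, of "\<lambda>X. fps_nth X 1"] d1 G0 Q0 by (simp add: fps_mult_nth_1)
  have E2: "3 * fps_nth G 2 = fps_nth Q 2 + fps_nth G 1 * fps_nth Q 1 + fps_nth G 2"
    using arg_cong[OF R2, of "\<lambda>X. fps_nth X 2"] d2 G0 Q0 by (simp add: fps_mult_nth_2)
  have E3: "4 * fps_nth G 3 = fps_nth Q 3 + fps_nth G 1 * fps_nth Q 2 + fps_nth G 2 * fps_nth Q 1 + fps_nth G 3"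
    using arg_cong[OF R2, of "\<lambda>X. fps_nth X 3"] d3 G0 Q0 by (simp add: fps_mult_nth_3)
  have W0: "fps_nth W 0 = 0" and W1: "fps_nth W 1 = fps_nth K 0" and W2: "fps_nth W 2 = fps_nth K 1"
    and W3: "fps_nth W 3 = fps_nth K 2" unfolding R4 by (simp_all add: numeral_eq_Suc)
  define T where "T = complex_of_real t"
  have cT: "c = 2*T - 1" unfolding c_def T_def by simp
  have F1: "fps_nth Q 1 - fps_nth K 0 = (2*T-1) * fps_nth K 0"
    using arg_cong[OF R3, of "\<lambda>X. fps_nth X 1"] W0 W1 Q0 cT by (simp add: fps_mult_nth_1)
  have F2: "fps_nth Q 2 - (fps_nth K 1 + fps_nth Q 1 * fps_nth K 0) = (2*T-1) * fps_nth K 1"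
    using arg_cong[OF R3, of "\<lambda>X. fps_nth X 2"] W0 W1 W2 Q0 cT by (simp add: fps_mult_nth_2)
  have F3: "fps_nth Q 3 - (fps_nth K 2 + fps_nth Q 1 * fps_nth K 1 + fps_nth Q 2 * fps_nth K 0) = (2*T-1) * fps_nth K 2"
    using arg_cong[OF R3, of "\<lambda>X. fps_nth X 3"] W0 W1 W2 W3 Q0 cT by (simp add: fps_mult_nth_3)
  define k0 where "k0 = fps_nth K 0"
  define k1 where "k1 = fps_nth K 1"
  define k2 where "k2 = fps_nth K 2"
  define A where "A = 4*k0*k2 + 2*k0^2*k1 - 3*k1^2 - 3*k0^4"
  have Hid: "taylor_coeff f 2 * taylor_coeff f 4 - (taylor_coeff f 3)\<^sup>2 = T^2/3 * (A - 4*(T^2-1)*k0^4)"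
    unfolding a2 a3 a4 A_def k0_def k1_def k2_def by (rule alg[OF E1 E2 E3 F1 F2 F3])
  have Ab: "norm A \<le> 3" unfolding A_def k0_def k1_def k2_def K_def
    by (rule A_bound[OF cb1(1,2,3)[OF holk kle] cb2[OF holk kle]])
  have k0b: "norm k0 \<le> 1" unfolding k0_def K_def by (rule cb1(1)[OF holk kle])
  show ?thesis unfolding Hid T_def t_def[symmetric] by (rule final_bound[OF Ab k0b t1])
qed

end
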